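(* There is a graph that contains every locally finite graph as an induced subgraph but contains no subdivision of $K_{\aleph_0}$.
   Context: All graphs are simple and countable. A graph is locally finite if every vertex has finite degree. *)

theory Defs
  imports Main
begin

text \<open>Countable simple graphs are represented with vertices in nat: a vertex set
V :: nat set and an adjacency relation E :: nat => nat => bool.\<close>

definition simple_graph :: "nat set \<Rightarrow> (nat \<Rightarrow> nat \<Rightarrow> bool) \<Rightarrow> bool" where
  "simple_graph V E \<longleftrightarrow>
     (\<forall>x y. E x y \<longrightarrow> x \<in> V \<and> y \<in> V) \<and>
     (\<forall>x y. E x y \<longrightarrow> E y x) \<and>
     (\<forall>x. \<not> E x x)"

definition locally_finite :: "nat set \<Rightarrow> (nat \<Rightarrow> nat \<Rightarrow> bool) \<Rightarrow> bool" where
  "locally_finite V E \<longleftrightarrow> (\<forall>x\<in>V. finite {y. E x y})"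

definition induced_embedding ::
  "(nat \<Rightarrow> nat) \<Rightarrow> nat set \<Rightarrow> (nat \<Rightarrow> nat \<Rightarrow> bool) \<Rightarrow> nat set \<Rightarrow> (nat \<Rightarrow> nat \<Rightarrow> bool) \<Rightarrow> bool" where
  "induced_embedding f W F V E \<longleftrightarrow>
     inj_on f W \<and> f ` W \<subseteq> V \<and> (\<forall>x\<in>W. \<forall>y\<in>W. F x y \<longleftrightarrow> E (f x) (f y))"

definition is_induced_subgraph_of ::
  "nat set \<Rightarrow> (nat \<Rightarrow> nat \<Rightarrow> bool) \<Rightarrow> nat set \<Rightarrow> (nat \<Rightarrow> nat \<Rightarrow> bool) \<Rightarrow> bool" where
  "is_induced_subgraph_of W F V E \<longleftrightarrow> (\<exists>f. induced_embedding f W F V E)"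

definition is_path :: "(nat \<Rightarrow> nat \<Rightarrow> bool) \<Rightarrow> nat list \<Rightarrow> bool" where
  "is_path E p \<longleftrightarrow> p \<noteq> [] \<and> distinct p \<and> (\<forall>i. Suc i < length p \<longrightarrow> E (p ! i) (p ! Suc i))"

definition inner_vertices :: "nat list \<Rightarrow> nat set" where
  "inner_vertices p = set (butlast (tl p))"

definition contains_TK_aleph0 :: "nat set \<Rightarrow> (nat \<Rightarrow> nat \<Rightarrow> bool) \<Rightarrow> bool" where
  "contains_TK_aleph0 V E \<longleftrightarrow>
     (\<exists>(b :: nat \<Rightarrow> nat) (P :: nat \<Rightarrow> nat \<Rightarrow> nat list).
        inj b \<and> range b \<subseteq> V \<and>
        (\<forall>i j. i < j \<longrightarrow> is_path E (P i j) \<and> set (P i j) \<subseteq> V \<and>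
                 hd (P i j) = b i \<and> last (P i j) = b j \<and>
                 inner_vertices (P i j) \<inter> range b = {}) \<and>
        (\<forall>i j k l. i < j \<longrightarrow> k < l \<longrightarrow> (i, j) \<noteq> (k, l) \<longrightarrow>
                 inner_vertices (P i j) \<inter> inner_vertices (P k l) = {}))"

end

theory Submission imports Defs "HOL-Library.Countable" "HOL-Library.Product_Lexorder" begin

type_synonym lay = "nat list \<times> (nat \<times> nat) list"
type_synonym vtx = "lay list \<times> nat"

definition UV :: "vtx set" where
  "UV = {p. fst p \<noteq> [] \<and> snd p \<in> set (fst (last (fst p)))}"

definition adjR :: "lay \<Rightarrow> nat \<Rightarrow> nat \<Rightarrow> bool" where
  "adjR l x y \<longleftrightarrow> (x,y) \<in> set (snd l) \<or> (y,x) \<in> set (snd l)"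

definition UE :: "vtx \<Rightarrow> vtx \<Rightarrow> bool" where
  "UE p q \<longleftrightarrow> p \<in> UV \<and> q \<in> UV \<and>
     ((fst q = fst p \<and> snd p \<noteq> snd q \<and> adjR (last (fst p)) (snd p) (snd q)) \<or>
      (\<exists>l. fst q = fst p @ [l] \<and> adjR l (snd p) (snd q)) \<or>
      (\<exists>l. fst p = fst q @ [l] \<and> adjR l (snd p) (snd q)))"

definition VV :: "nat set" where "VV = to_nat ` UV"
definition EE :: "nat \<Rightarrow> nat \<Rightarrow> bool" where
  "EE a b \<longleftrightarrow> (\<exists>p q. a = to_nat p \<and> b = to_nat q \<and> UE p q)"

definition node :: "nat \<Rightarrow> lay list" where "node a = fst (from_nat a :: vtx)"

lemma adjR_sym: "adjR l x y \<Longrightarrow> adjR l y x"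
  unfolding adjR_def by auto

lemma UE_sym: "UE p q \<Longrightarrow> UE q p"
  unfolding UE_def using adjR_sym by metis

lemma UE_irrefl: "\<not> UE p p"
  unfolding UE_def by auto

lemma EE_iff: "EE (to_nat p) (to_nat q) \<longleftrightarrow> UE p q"
  unfolding EE_def by auto

lemma UE_UV: "UE p q \<Longrightarrow> p \<in> UV \<and> q \<in> UV" by (simp add: UE_def)

lemma simple_VE: "simple_graph VV EE"
  unfolding simple_graph_def
proof (intro conjI allI impI)
  fix x y assume "EE x y"
  then obtain p q where "x = to_nat p" "y = to_nat q" "UE p q" unfolding EE_def by blast
  then show "x \<in> VV" using UE_UV unfolding VV_def by blast
next
  fix x y assume "EE x y"
  then obtain p q where "x = to_nat p" "y = to_nat q" "UE p q" unfolding EE_def by blast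
  then show "y \<in> VV" using UE_UV unfolding VV_def by blast
next
  fix x y assume "EE x y"
  then obtain p q where "x = to_nat p" "y = to_nat q" "UE p q" unfolding EE_def by blast
  then show "EE y x" unfolding EE_def using UE_sym by blast
next
  fix x show "\<not> EE x x" unfolding EE_def using UE_irrefl by auto
qed

lemma EE_node: "EE a b \<Longrightarrow> node b = node a \<or> (\<exists>l. node b = node a @ [l]) \<or> (\<exists>l. node a = node b @ [l])"
  unfolding EE_def node_def UE_def by auto

fun walk :: "(nat \<Rightarrow> nat \<Rightarrow> bool) \<Rightarrow> nat list \<Rightarrow> bool" where
  "walk E (x # y # xs) \<longleftrightarrow> E x y \<and> walk E (y # xs)"
| "walk E _ \<longleftrightarrow> True"

lemma walk_idx: "walk E xs \<longleftrightarrow> (\<forall>i. Suc i < length xs \<longrightarrow> E (xs!i) (xs!Suc i))"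
proof (induction E xs rule: walk.induct)
  case (1 E x y xs)
  show ?case
    apply (simp add: 1)
    apply (rule iffI)
     apply clarsimp
    subgoal for i by (cases i) auto
    apply (intro conjI)
     apply (erule allE[of _ 0]) apply simp
    apply clarify
    subgoal for i by (erule allE[of _ "Suc i"]) simp
    done
qed auto

lemma walk_append: "walk E (xs @ [a]) \<Longrightarrow> walk E (a # ys) \<Longrightarrow> walk E (xs @ a # ys)"
proof (induction xs)
  case (Cons x xs)
  then show ?case by (cases xs) auto
qed simp

lemma walk_rev: "(\<And>x y. E x y \<Longrightarrow> E y x) \<Longrightarrow> walk E xs \<Longrightarrow> walk E (rev xs)"
proof (induction E xs rule: walk.induct)
  case (1 E x y xs)
  then have "walk E (rev xs @ [y])" by simp
  moreover have "walk E [y, x]" using 1 by simp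
  ultimately show ?case using walk_append[of E "rev xs" y "[x]"] by simp
qed auto

lemma walkA:
  assumes "walk EE (x # m @ [v])" "\<forall>a\<in>set m. node a \<noteq> t" "node x = t @ s" "s \<noteq> []"
  shows "\<exists>s'. node v = t @ s'"
  using assms
proof (induction m arbitrary: x s)
  case Nil
  then have "EE x v" by simp
  from EE_node[OF this] Nil show ?case
    apply (elim disjE exE)
      apply auto[2]
    subgoal for l by (cases s rule: rev_cases) auto
    done
next
  case (Cons a m)
  then have e: "EE x a" and w: "walk EE (a # m @ [v])" by auto
  have "node a \<noteq> t" using Cons by auto
  from EE_node[OF e] Cons(4,5) this obtain s'' where "node a = t @ s''" "s'' \<noteq> []"
    apply (elim disjE exE)
      apply auto[2]
    subgoal for l
      by (cases s rule: rev_cases) auto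
    done
  then show ?case using Cons(1)[OF w] Cons(3) by auto
qed

lemma walkB:
  assumes "walk EE (u # m @ [v])" "m \<noteq> []"
    "\<forall>a\<in>set m. node a \<noteq> node u \<and> node a \<noteq> butlast (node u)"
  shows "\<exists>s'. node v = node u @ s'"
proof -
  obtain a m' where m: "m = a # m'" using assms(2) by (cases m) auto
  with assms have e: "EE u a" and w: "walk EE (a # m' @ [v])" by auto
  from EE_node[OF e] assms(3) m obtain l where "node a = node u @ [l]" by auto
  then show ?thesis using walkA[OF w, of "node u" "[l]"] assms(3) m by auto
qed

lemma walkC:
  assumes "walk EE (u # m @ [v])" "m \<noteq> []"
    "\<forall>a\<in>set m. node a \<noteq> node u \<and> node a \<noteq> butlast (node u) \<and> node a \<noteq> node v \<and> node a \<noteq> butlast (node v)"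
  shows "node u = node v"
proof -
  have s: "\<And>x y. EE x y \<Longrightarrow> EE y x" unfolding EE_def using UE_sym by blast
  obtain s1 where 1: "node v = node u @ s1" using walkB[OF assms(1,2)] assms(3) by blast
  have "walk EE (v # rev m @ [u])" using walk_rev[OF _ assms(1)] s by simp
  then obtain s2 where 2: "node u = node v @ s2" using walkB[of v "rev m" u] assms(2,3) by auto
  from 1 2 show ?thesis by simp
qed

lemma finite_node: "finite {a\<in>VV. node a = t}"
proof -
  have "{a\<in>VV. node a = t} \<subseteq> to_nat ` ((\<lambda>x. (t,x)) ` set (fst (last t)))"
  proof
    fix a assume a: "a \<in> {a\<in>VV. node a = t}"
    then obtain p where p: "p \<in> UV" "a = to_nat p" unfolding VV_def by blast
    then have "fst p = t" using a unfolding node_def by simp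
    then have "p = (t, snd p)" "snd p \<in> set (fst (last t))" using p(1) unfolding UV_def by auto
    then show "a \<in> to_nat ` ((\<lambda>x. (t,x)) ` set (fst (last t)))" using p(2) by blast
  qed
  then show ?thesis by (rule finite_subset) auto
qed


lemma list_decomp: "p \<noteq> [] \<Longrightarrow> hd p \<noteq> last p \<Longrightarrow> p = hd p # butlast (tl p) @ [last p]"
  by (cases p) (auto simp: append_butlast_last_id)

lemma inner_sub: "set (butlast (tl p)) \<subseteq> set p"
  by (cases p) (auto dest: in_set_butlastD)

lemma path_walk: "is_path E p \<Longrightarrow> walk E p"
  unfolding is_path_def walk_idx by blast

lemma EE_sym: "EE x y \<Longrightarrow> EE y x" unfolding EE_def using UE_sym by blast

lemma noTK: "\<not> contains_TK_aleph0 VV EE"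
proof
  assume "contains_TK_aleph0 VV EE"
  then show False unfolding contains_TK_aleph0_def
  proof (elim exE conjE)
  fix b :: "nat \<Rightarrow> nat" and P :: "nat \<Rightarrow> nat \<Rightarrow> nat list"
  assume ib: "inj b" and rb: "range b \<subseteq> VV"
    and pp0: "\<forall>i j. i < j \<longrightarrow> is_path EE (P i j) \<and> set (P i j) \<subseteq> VV \<and>
                 hd (P i j) = b i \<and> last (P i j) = b j \<and>
                 inner_vertices (P i j) \<inter> range b = {}"
    and dj0: "\<forall>i j k l. i < j \<longrightarrow> k < l \<longrightarrow> (i, j) \<noteq> (k, l) \<longrightarrow>
                 inner_vertices (P i j) \<inter> inner_vertices (P k l) = {}"
  have pp: "is_path EE (P i j) \<and> set (P i j) \<subseteq> VV \<and>
                 hd (P i j) = b i \<and> last (P i j) = b j \<and>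
                 inner_vertices (P i j) \<inter> range b = {}" if "i < j" for i j
    using pp0[rule_format, OF that] .
  have dj: "inner_vertices (P i j) \<inter> inner_vertices (P k l) = {}"
    if "i < j" "k < l" "(i, j) \<noteq> (k, l)" for i j k l
    using dj0[rule_format, OF that] .
  have dec: "P i j = b i # butlast (tl (P i j)) @ [b j]" if "i < j" for i j
  proof -
    have "P i j \<noteq> []" using pp[OF that] unfolding is_path_def by auto
    moreover have "b i \<noteq> b j" using ib that injD by fastforce
    moreover have h: "hd (P i j) = b i" "last (P i j) = b j" using pp[OF that] by auto
    ultimately have "P i j = hd (P i j) # butlast (tl (P i j)) @ [last (P i j)]"
      by (intro list_decomp) auto
    then show ?thesis unfolding h .
  qed
  have key: "node (b j) = node (b 0)" if "0 < j" for j
  proof (rule ccontr)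
    assume ne: "node (b j) \<noteq> node (b 0)"
    define S where "S = {a\<in>VV. node a = node (b 0)} \<union> {a\<in>VV. node a = butlast (node (b 0))}
       \<union> {a\<in>VV. node a = node (b j)} \<union> {a\<in>VV. node a = butlast (node (b j))}"
    have fS: "finite S" unfolding S_def using finite_node by auto
    define I where "I k = inner_vertices (P 0 k) \<union> {b k} \<union> inner_vertices (P j k)" for k
    have hit: "\<exists>a. a \<in> I k \<inter> S" if "j < k" for k
    proof (rule ccontr)
      assume nh: "\<not> ?thesis"
      have k0: "0 < k" using that \<open>0 < j\<close> by simp
      let ?m1 = "butlast (tl (P 0 k))" and ?m2 = "butlast (tl (P j k))"
      have w1: "walk EE (b 0 # ?m1 @ [b k])" using path_walk[OF conjunct1[OF pp[OF k0]]] by (subst (asm) dec[OF k0])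
      have w2: "walk EE (b j # ?m2 @ [b k])" using path_walk[OF conjunct1[OF pp[OF that]]] by (subst (asm) dec[OF that])
      have w2r: "walk EE (b k # rev ?m2 @ [b j])" using walk_rev[OF _ w2] EE_sym by fastforce
      have w: "walk EE (b 0 # (?m1 @ b k # rev ?m2) @ [b j])"
        using walk_append[of EE "b 0 # ?m1" "b k" "rev ?m2 @ [b j]"] w1 w2r by simp
      have sub: "set (?m1 @ b k # rev ?m2) \<subseteq> VV"
      proof -
        have "set ?m1 \<subseteq> set (P 0 k)" "set ?m2 \<subseteq> set (P j k)"
          by (rule inner_sub)+
        then show ?thesis using pp[OF k0] pp[OF that] rb by auto
      qed
      have "set (?m1 @ b k # rev ?m2) = I k" unfolding I_def inner_vertices_def by auto
      then have "\<forall>a\<in>set (?m1 @ b k # rev ?m2). a \<notin> S"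
        using nh by blast
      then have "\<forall>a\<in>set (?m1 @ b k # rev ?m2). node a \<noteq> node (b 0) \<and> node a \<noteq> butlast (node (b 0))
          \<and> node a \<noteq> node (b j) \<and> node a \<noteq> butlast (node (b j))"
        using sub unfolding S_def by blast
      from walkC[OF w _ this] ne show False by simp
    qed
    define g where "g k = (SOME a. a \<in> I k \<inter> S)" for k
    have g: "g k \<in> I k \<inter> S" if "j < k" for k using hit[OF that] unfolding g_def by (rule someI_ex)
    have "inj_on g {j<..}"
    proof
      fix k k' assume k: "k \<in> {j<..}" and k': "k' \<in> {j<..}" and e: "g k = g k'"
      show "k = k'"
      proof (rule ccontr)
        assume kk: "k \<noteq> k'"
        have k0: "0 < k" "0 < k'" using k k' \<open>0<j\<close> by auto
        have jk: "j < k" "j < k'" using k k' by auto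
        have "inner_vertices (P 0 k) \<inter> inner_vertices (P 0 k') = {}" using dj[of 0 k 0 k'] k0 kk by auto
        moreover have "inner_vertices (P 0 k) \<inter> inner_vertices (P j k') = {}" using dj[of 0 k j k'] k0 jk \<open>0<j\<close> by auto
        moreover have "inner_vertices (P j k) \<inter> inner_vertices (P 0 k') = {}" using dj[of j k 0 k'] k0 jk \<open>0<j\<close> by auto
        moreover have "inner_vertices (P j k) \<inter> inner_vertices (P j k') = {}" using dj[of j k j k'] jk kk by auto
        moreover have "b k \<noteq> b k'" using ib kk by (auto dest: injD)
        moreover have "b k \<notin> inner_vertices (P 0 k')" "b k \<notin> inner_vertices (P j k')"
          "b k' \<notin> inner_vertices (P 0 k)" "b k' \<notin> inner_vertices (P j k)"
          using pp[of 0 k'] pp[of j k'] pp[of 0 k] pp[of j k] k0 jk by auto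
        ultimately have d: "I k \<inter> I k' = {}" unfolding I_def by blast
        then show False using g[of k] g[of k'] e k k' by auto
      qed
    qed
    moreover have "g ` {j<..} \<subseteq> S" using g by auto
    ultimately have "finite {j<..}" using fS by (meson finite_imageD finite_subset)
    moreover have "(UNIV :: nat set) = {..j} \<union> {j<..}" by auto
    ultimately have "finite (UNIV :: nat set)" by (metis finite_Un finite_atMost)
    then show False by simp
  qed
  have "range b \<subseteq> {a\<in>VV. node a = node (b 0)}"
  proof (rule subsetI)
    fix x assume "x \<in> range b"
    then obtain i where x: "x = b i" by auto
    have "b i \<in> VV" using rb by auto
    moreover have "node (b i) = node (b 0)"
    proof (cases i)
      case 0 then show ?thesis by simp
    next
      case (Suc n) then show ?thesis using key[of i] by simp
    qed
    ultimately show "x \<in> {a\<in>VV. node a = node (b 0)}" using x by simp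
  qed
  then have "finite (range b)" using finite_subset[OF _ finite_node] by blast
  then have "finite (UNIV :: nat set)" using finite_imageD ib by blast
  then show False by simp
qed
qed

lemma UE_adj: "UE p q \<Longrightarrow> \<exists>l \<in> set (fst p) \<union> set (fst q). adjR l (snd p) (snd q)"
  unfolding UE_def UV_def by auto

primrec Cs :: "nat set \<Rightarrow> (nat \<Rightarrow> nat \<Rightarrow> bool) \<Rightarrow> nat \<Rightarrow> nat set" where
  "Cs W F 0 = W \<inter> {0}"
| "Cs W F (Suc n) = Cs W F n \<union> {y. \<exists>x\<in>Cs W F n. F x y} \<union> (W \<inter> {Suc n})"

definition Lay :: "nat set \<Rightarrow> (nat \<Rightarrow> nat \<Rightarrow> bool) \<Rightarrow> nat \<Rightarrow> lay" where
  "Lay W F k = (sorted_list_of_set (Cs W F k),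
     sorted_list_of_set {(a,b). a \<in> Cs W F k \<and> b \<in> Cs W F k \<and> F a b})"

definition TT :: "nat set \<Rightarrow> (nat \<Rightarrow> nat \<Rightarrow> bool) \<Rightarrow> nat \<Rightarrow> lay list" where
  "TT W F n = map (Lay W F) [0..<Suc n]"

definition lv :: "nat set \<Rightarrow> (nat \<Rightarrow> nat \<Rightarrow> bool) \<Rightarrow> nat \<Rightarrow> nat" where
  "lv W F x = (LEAST n. x \<in> Cs W F n)"

lemma TT_facts: "TT W F n \<noteq> []" "last (TT W F n) = Lay W F n"
  "TT W F (Suc n) = TT W F n @ [Lay W F (Suc n)]" "set (TT W F n) \<subseteq> range (Lay W F)"
  unfolding TT_def by auto

context
  fixes W :: "nat set" and F :: "nat \<Rightarrow> nat \<Rightarrow> bool"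
  assumes sg: "simple_graph W F" and lf: "locally_finite W F"
begin

lemma F_W: "F x y \<Longrightarrow> x \<in> W \<and> y \<in> W" using sg unfolding simple_graph_def by blast
lemma F_sym: "F x y \<Longrightarrow> F y x" using sg unfolding simple_graph_def by blast
lemma F_irr: "\<not> F x x" using sg unfolding simple_graph_def by blast

lemma Cs_sub: "Cs W F n \<subseteq> W"
  by (induction n) (auto dest: F_W)

lemma Cs_fin: "finite (Cs W F n)"
proof (induction n)
  case 0 then show ?case by simp
next
  case (Suc n)
  have "{y. \<exists>x\<in>Cs W F n. F x y} = (\<Union>x\<in>Cs W F n. {y. F x y})" by auto
  moreover have "finite (\<Union>x\<in>Cs W F n. {y. F x y})"
    using Suc Cs_sub lf unfolding locally_finite_def by blast
  ultimately show ?case using Suc by simp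
qed

lemma Cs_mono: "n \<le> m \<Longrightarrow> Cs W F n \<subseteq> Cs W F m"
  by (induction m) (auto simp: le_Suc_eq)

lemma Cs_self: "x \<in> W \<Longrightarrow> x \<in> Cs W F x"
  by (cases x) auto

lemma Cs_step: "x \<in> Cs W F n \<Longrightarrow> F x y \<Longrightarrow> y \<in> Cs W F (Suc n)"
  by auto

lemma lv_in: "x \<in> W \<Longrightarrow> x \<in> Cs W F (lv W F x)"
  unfolding lv_def by (rule LeastI[of _ x]) (rule Cs_self)

lemma lv_le: "x \<in> Cs W F n \<Longrightarrow> lv W F x \<le> n"
  unfolding lv_def by (rule Least_le)

lemma lv_adj: "F x y \<Longrightarrow> lv W F y \<le> Suc (lv W F x)"
  using lv_in F_W Cs_step lv_le by blast

lemma Lay_fst: "set (fst (Lay W F k)) = Cs W F k"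
  unfolding Lay_def using Cs_fin by simp

lemma Lay_snd: "set (snd (Lay W F k)) = {(a,b). a \<in> Cs W F k \<and> b \<in> Cs W F k \<and> F a b}"
proof -
  have "{(a,b). a \<in> Cs W F k \<and> b \<in> Cs W F k \<and> F a b} \<subseteq> Cs W F k \<times> Cs W F k" by auto
  then have "finite {(a,b). a \<in> Cs W F k \<and> b \<in> Cs W F k \<and> F a b}"
    using Cs_fin finite_subset by blast
  then show ?thesis unfolding Lay_def by simp
qed

lemma adjR_Lay: "adjR (Lay W F k) x y \<Longrightarrow> F x y"
  unfolding adjR_def Lay_snd using F_sym by auto

lemma Lay_adjR: "x \<in> Cs W F k \<Longrightarrow> y \<in> Cs W F k \<Longrightarrow> F x y \<Longrightarrow> adjR (Lay W F k) x y"
  unfolding adjR_def Lay_snd by auto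

lemma inUV: "x \<in> W \<Longrightarrow> (TT W F (lv W F x), x) \<in> UV"
  unfolding UV_def using TT_facts Lay_fst lv_in by auto

lemma emb_iff:
  assumes x: "x \<in> W" and y: "y \<in> W"
  shows "F x y \<longleftrightarrow> UE (TT W F (lv W F x), x) (TT W F (lv W F y), y)"
proof
  assume "F x y"
  define n where "n = lv W F x"
  define m where "m = lv W F y"
  have mn: "m \<le> Suc n" "n \<le> Suc m" using lv_adj \<open>F x y\<close> F_sym unfolding n_def m_def by blast+
  have xn: "x \<in> Cs W F n" "y \<in> Cs W F m" unfolding n_def m_def using lv_in x y by auto
  have "x \<noteq> y" using \<open>F x y\<close> F_irr by auto
  have "m = n \<or> m = Suc n \<or> n = Suc m" using mn by auto
  then show "UE (TT W F (lv W F x), x) (TT W F (lv W F y), y)"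
  proof (elim disjE)
    assume "m = n"
    then show ?thesis using inUV[OF x] inUV[OF y] x y xn \<open>x \<noteq> y\<close> Lay_adjR[of x n y] \<open>F x y\<close> TT_facts(2)
      unfolding n_def m_def by (auto simp: UE_def)
  next
    assume "m = Suc n"
    then have "Lay_adj": "adjR (Lay W F m) x y" using Lay_adjR[of x m y] xn Cs_mono[of n m] \<open>F x y\<close> by auto
    then show ?thesis using inUV[OF x] inUV[OF y] x y \<open>m = Suc n\<close> TT_facts(3)[of W F n]
      unfolding n_def m_def by (auto simp: UE_def)
  next
    assume "n = Suc m"
    then have "Lay_adj": "adjR (Lay W F n) x y" using Lay_adjR[of x n y] xn Cs_mono[of m n] \<open>F x y\<close> by auto
    then show ?thesis using inUV[OF x] inUV[OF y] x y \<open>n = Suc m\<close> TT_facts(3)[of W F m]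
      unfolding n_def m_def by (auto simp: UE_def)
  qed
next
  assume "UE (TT W F (lv W F x), x) (TT W F (lv W F y), y)"
  from UE_adj[OF this] obtain l where
    "l \<in> set (TT W F (lv W F x)) \<union> set (TT W F (lv W F y))" "adjR l x y" by auto
  then obtain k where "l = Lay W F k" using TT_facts(4) by blast
  then show "F x y" using adjR_Lay \<open>adjR l x y\<close> by simp
qed

lemma universal: "is_induced_subgraph_of W F VV EE"
  unfolding is_induced_subgraph_of_def induced_embedding_def
proof (intro exI conjI)
  let ?f = "\<lambda>x. to_nat (TT W F (lv W F x), x)"
  show "inj_on ?f W" by (auto intro: inj_onI)
  show "?f ` W \<subseteq> VV" unfolding VV_def using inUV by auto
  show "\<forall>x\<in>W. \<forall>y\<in>W. F x y = EE (?f x) (?f y)" using emb_iff EE_iff by auto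
qed

end

theorem mainTheorem19:
  shows "\<exists>(V :: nat set) (E :: nat \<Rightarrow> nat \<Rightarrow> bool).
           simple_graph V E \<and>
           (\<forall>(W :: nat set) (F :: nat \<Rightarrow> nat \<Rightarrow> bool).
              simple_graph W F \<and> locally_finite W F \<longrightarrow> is_induced_subgraph_of W F V E) \<and>
           \<not> contains_TK_aleph0 V E"
  using simple_VE universal noTK by blast

end
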